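(* Let $K$ be a field of characteristic $p>0$, $s\geq1$ an integer, $n=1+p^s$, let $X$ be the $n\times n$ matrix with $1$'s in positions $(i,i+1)$, $1\leq i\leq n-1$, and $0$ elsewhere, let $B=1+X$, and let $k$ be a positive integer. Then: (1) there exists a unique matrix $A\in\mathrm{U}_n(K)$ whose last column has only zero entries except at position $(n,n)$ such that $ABA^{-1}=B^{1+p^k}$; (2) if $p=2$, there exists a unique matrix $A\in\mathrm{U}_n(K)$ whose last column has only zero entries except at position $(n,n)$ such that $ABA^{-1}=B^{-(1+2^k)}$.
   Context: $\mathrm{U}_n(K)$ is the group of upper-triangular unipotent $n\times n$ matrices over $K$. *)

theory Defs
  imports "Jordan_Normal_Form.Matrix"
begin

definition unitri_upper :: "nat \<Rightarrow> 'a :: field mat \<Rightarrow> bool" where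
  "unitri_upper n A \<longleftrightarrow> A \<in> carrier_mat n n \<and> (\<forall>i<n. A $$ (i,i) = 1)
      \<and> (\<forall>i<n. \<forall>j<i. A $$ (i,j) = 0)"

definition mat_inv :: "'a :: field mat \<Rightarrow> 'a mat" where
  "mat_inv A = (THE C. C \<in> carrier_mat (dim_row A) (dim_row A) \<and> inverts_mat A C \<and> inverts_mat C A)"

definition shiftX :: "nat \<Rightarrow> 'a :: field mat" where
  "shiftX n = mat n n (\<lambda>(i,j). if j = Suc i then 1 else 0)"

(* last column zero except at (n,n) -- 0-based: column n-1, rows < n-1 *)
definition last_col_trivial :: "nat \<Rightarrow> 'a :: field mat \<Rightarrow> bool" where
  "last_col_trivial n A \<longleftrightarrow> (\<forall>i < n - 1. A $$ (i, n - 1) = 0)"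

end

theory Submission imports Defs "Jordan_Normal_Form.Determinant" begin

lemma mult_entry:
  assumes "A \<in> carrier_mat n n" "B \<in> carrier_mat n n" "i < n" "j < n"
  shows "(A * B) $$ (i,j) = (\<Sum>r<n. A $$ (i,r) * B $$ (r,j))"
  using assms by (simp add: scalar_prod_def atLeast0LessThan)

lemma sum_one_pt:
  fixes f :: "nat \<Rightarrow> 'a::comm_monoid_add"
  assumes "i < n" "\<And>r. r < n \<Longrightarrow> r \<noteq> i \<Longrightarrow> f r = 0"
  shows "(\<Sum>r<n. f r) = f i"
proof -
  have "(\<Sum>r<n. f r) = f i + (\<Sum>r\<in>{..<n} - {i}. f r)"
    using assms(1) by (simp add: sum.remove)
  also have "(\<Sum>r\<in>{..<n} - {i}. f r) = 0" using assms(2) by (intro sum.neutral) auto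
  finally show ?thesis by simp
qed

lemma sum_two_pt:
  fixes f :: "nat \<Rightarrow> 'a::comm_monoid_add"
  assumes "i < n" "j < n" "i \<noteq> j" "\<And>r. r < n \<Longrightarrow> r \<noteq> i \<Longrightarrow> r \<noteq> j \<Longrightarrow> f r = 0"
  shows "(\<Sum>r<n. f r) = f i + f j"
proof -
  have "(\<Sum>r<n. f r) = f i + (\<Sum>r\<in>{..<n} - {i}. f r)"
    using assms(1) by (simp add: sum.remove)
  also have "(\<Sum>r\<in>{..<n} - {i}. f r) = f j + (\<Sum>r\<in>{..<n} - {i} - {j}. f r)"
    using assms by (subst sum.remove[of _ j]) auto
  also have "(\<Sum>r\<in>{..<n} - {i} - {j}. f r) = 0" using assms(4) by (intro sum.neutral) auto
  finally show ?thesis by simp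
qed

definition ut1 :: "nat \<Rightarrow> 'a::field \<Rightarrow> 'a mat \<Rightarrow> bool" where
  "ut1 n d M \<longleftrightarrow> M \<in> carrier_mat n n \<and> (\<forall>i<n. M $$ (i,i) = 1) \<and> (\<forall>i<n. \<forall>j<i. M $$ (i,j) = 0)
     \<and> (\<forall>i. Suc i < n \<longrightarrow> M $$ (i, Suc i) = d)"

lemma ut1_mult:
  assumes M: "ut1 n d M" and N: "ut1 n e N"
  shows "ut1 n (d + e) (M * N)"
proof -
  have cM: "M \<in> carrier_mat n n" and cN: "N \<in> carrier_mat n n" using M N by (auto simp: ut1_def)
  have low: "(M*N) $$ (i,j) = 0" if "i < n" "j < i" for i j
  proof -
    have "(M*N) $$ (i,j) = (\<Sum>r<n. M $$ (i,r) * N $$ (r,j))" using that cM cN by (intro mult_entry) auto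
    also have "\<dots> = 0"
    proof (intro sum.neutral ballI)
      fix r assume "r \<in> {..<n}"
      show "M $$ (i,r) * N $$ (r,j) = 0"
        using M N that \<open>r \<in> {..<n}\<close> unfolding ut1_def
        by (cases "r < i") auto
    qed
    finally show ?thesis .
  qed
  have diag: "(M*N) $$ (i,i) = 1" if "i < n" for i
  proof -
    have "(M*N) $$ (i,i) = (\<Sum>r<n. M $$ (i,r) * N $$ (r,i))" using that cM cN by (intro mult_entry) auto
    also have "\<dots> = M $$ (i,i) * N $$ (i,i)"
    proof (rule sum_one_pt[OF that])
      fix r assume "r < n" "r \<noteq> i"
      then show "M $$ (i,r) * N $$ (r,i) = 0" using M N that unfolding ut1_def
        by (cases "r < i") auto
    qed
    finally show ?thesis using M N that by (simp add: ut1_def)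
  qed
  have sup: "(M*N) $$ (i,Suc i) = d + e" if "Suc i < n" for i
  proof -
    have "(M*N) $$ (i,Suc i) = (\<Sum>r<n. M $$ (i,r) * N $$ (r,Suc i))" using that cM cN by (intro mult_entry) auto
    also have "\<dots> = M $$ (i,i) * N $$ (i,Suc i) + M $$ (i,Suc i) * N $$ (Suc i,Suc i)"
    proof (rule sum_two_pt)
      fix r assume "r < n" "r \<noteq> i" "r \<noteq> Suc i"
      then show "M $$ (i,r) * N $$ (r,Suc i) = 0" using M N that unfolding ut1_def
        by (cases "r < i") auto
    qed (use that in auto)
    finally show ?thesis using M N that by (simp add: ut1_def)
  qed
  show ?thesis unfolding ut1_def using cM cN low diag sup by auto
qed

lemma ut1_one: "ut1 n 0 (1\<^sub>m n)"
  unfolding ut1_def by auto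

lemma ut1_pow: assumes "ut1 n d M" shows "ut1 n (of_nat m * d) (M ^\<^sub>m m)"
proof (induction m)
  case 0
  have "dim_row M = n" using assms by (auto simp: ut1_def)
  then show ?case using ut1_one by simp
next
  case (Suc m)
  have "ut1 n (of_nat m * d + d) (M ^\<^sub>m m * M)" by (rule ut1_mult[OF Suc assms])
  then show ?case by (simp add: algebra_simps)
qed

definition su :: "nat \<Rightarrow> 'a::field mat \<Rightarrow> bool" where
  "su n Y \<longleftrightarrow> Y \<in> carrier_mat n n \<and> (\<forall>i<n. \<forall>j<n. j \<le> i \<longrightarrow> Y $$ (i,j) = 0)
     \<and> (\<forall>i. Suc i < n \<longrightarrow> Y $$ (i, Suc i) = 1)"

lemma su_pow:
  assumes Y: "su n Y"
  shows "i < n \<Longrightarrow> l < n \<Longrightarrow> (l < i + j \<longrightarrow> (Y ^\<^sub>m j) $$ (i,l) = 0) \<and> (l = i + j \<longrightarrow> (Y ^\<^sub>m j) $$ (i,l) = 1)"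
proof (induction j arbitrary: i l)
  case 0
  have "dim_row Y = n" using Y by (auto simp: su_def)
  then show ?case using 0 by auto
next
  case (Suc j)
  have cY: "Y \<in> carrier_mat n n" using Y by (auto simp: su_def)
  have e: "(Y ^\<^sub>m Suc j) $$ (i,l) = (\<Sum>r<n. (Y ^\<^sub>m j) $$ (i,r) * Y $$ (r,l))"
    unfolding pow_mat.simps(2) by (rule mult_entry) (use Suc.prems cY in auto)
  have A: "(Y ^\<^sub>m Suc j) $$ (i,l) = 0" if "l < i + Suc j"
  proof -
    have "(\<Sum>r<n. (Y ^\<^sub>m j) $$ (i,r) * Y $$ (r,l)) = 0"
    proof (intro sum.neutral ballI)
      fix r assume r: "r \<in> {..<n}"
      show "(Y ^\<^sub>m j) $$ (i,r) * Y $$ (r,l) = 0"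
      proof (cases "r < i + j")
        case True then show ?thesis using Suc.IH[of i r] Suc.prems r by auto
      next
        case False then show ?thesis using Y that r Suc.prems unfolding su_def by auto
      qed
    qed
    then show ?thesis using e by simp
  qed
  have B: "(Y ^\<^sub>m Suc j) $$ (i,l) = 1" if "l = i + Suc j"
  proof -
    have "(\<Sum>r<n. (Y ^\<^sub>m j) $$ (i,r) * Y $$ (r,l)) = (Y ^\<^sub>m j) $$ (i,i+j) * Y $$ (i+j,l)"
    proof (rule sum_one_pt)
      show "i + j < n" using that Suc.prems by auto
      fix r assume r: "r < n" "r \<noteq> i + j"
      show "(Y ^\<^sub>m j) $$ (i,r) * Y $$ (r,l) = 0"
      proof (cases "r < i + j")
        case True then show ?thesis using Suc.IH[of i r] Suc.prems r by auto
      next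
        case False then show ?thesis using Y that r Suc.prems unfolding su_def by auto
      qed
    qed
    also have "\<dots> = 1" using Suc.IH[of i "i+j"] Y Suc.prems that unfolding su_def by auto
    finally show ?thesis using e by simp
  qed
  show ?case using A B by auto
qed

lemma pow_mat_Suc_left:
  assumes "Y \<in> carrier_mat n n"
  shows "Y * Y ^\<^sub>m m = Y ^\<^sub>m Suc m"
proof (induction m)
  case 0 then show ?case using assms by simp
next
  case (Suc m)
  have "Y * Y ^\<^sub>m Suc m = (Y * Y ^\<^sub>m m) * Y"
    using assms by (simp del: assoc_mult_mat add: assoc_mult_mat[of Y n n "Y ^\<^sub>m m" n Y n, symmetric])
  then show ?case using Suc by simp
qed

lemma shift_right:
  assumes A: "A \<in> carrier_mat n n" and i: "i < n" and c: "c < n"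
  shows "(A * shiftX n) $$ (i,c) = (if c = 0 then 0 else A $$ (i, c - 1))"
proof -
  have cX: "shiftX n \<in> carrier_mat n n" by (simp add: shiftX_def)
  have e: "(A * shiftX n) $$ (i,c) = (\<Sum>r<n. A $$ (i,r) * shiftX n $$ (r,c))"
    using A cX i c by (intro mult_entry) auto
  show ?thesis
  proof (cases c)
    case 0
    then show ?thesis using e c by (simp add: shiftX_def)
  next
    case (Suc c')
    have "(\<Sum>r<n. A $$ (i,r) * shiftX n $$ (r,c)) = A $$ (i,c') * shiftX n $$ (c',c)"
      by (rule sum_one_pt) (use Suc c in \<open>auto simp: shiftX_def\<close>)
    then show ?thesis using e Suc c by (simp add: shiftX_def)
  qed
qed

definition Acon :: "nat \<Rightarrow> 'a::field mat \<Rightarrow> 'a mat" where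
  "Acon n Y = mat n n (\<lambda>(i,c). (Y ^\<^sub>m (n - 1 - c)) $$ (i, n - 1))"

lemma Acon_good:
  assumes Y: "su n Y" and n: "n > 0"
  shows "unitri_upper n (Acon n Y) \<and> last_col_trivial n (Acon n Y) \<and> Acon n Y * shiftX n = Y * Acon n Y"
proof -
  have cY: "Y \<in> carrier_mat n n" using Y by (auto simp: su_def)
  have c: "Acon n Y \<in> carrier_mat n n" by (simp add: Acon_def)
  have u: "unitri_upper n (Acon n Y)"
    unfolding unitri_upper_def
  proof (intro conjI allI impI)
    fix i assume i: "i < n"
    show "Acon n Y $$ (i,i) = 1" using su_pow[OF Y i, of "n-1" "n-1-i"] i by (simp add: Acon_def)
  next
    fix i j assume i: "i < n" and j: "j < i"
    show "Acon n Y $$ (i,j) = 0" using su_pow[OF Y i, of "n-1" "n-1-j"] i j by (simp add: Acon_def)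
  qed (use c in auto)
  have l: "last_col_trivial n (Acon n Y)"
    unfolding last_col_trivial_def using cY n by (auto simp: Acon_def)
  have m: "Acon n Y * shiftX n = Y * Acon n Y"
  proof (rule eq_matI)
    fix i c assume "i < dim_row (Y * Acon n Y)" "c < dim_col (Y * Acon n Y)"
    then have i: "i < n" and cc: "c < n" using cY by (auto simp: Acon_def)
    have "(Y * Acon n Y) $$ (i,c) = (\<Sum>r<n. Y $$ (i,r) * (Y ^\<^sub>m (n - 1 - c)) $$ (r, n - 1))"
      using i cc cY c by (subst mult_entry[of _ n], auto intro!: sum.cong simp: Acon_def)
    also have "\<dots> = (Y * Y ^\<^sub>m (n - 1 - c)) $$ (i, n - 1)"
      using i cY n by (subst mult_entry[of _ n]) auto
    also have "\<dots> = (Y ^\<^sub>m Suc (n - 1 - c)) $$ (i, n - 1)"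
      using pow_mat_Suc_left[OF cY] by simp
    finally have e: "(Y * Acon n Y) $$ (i,c) = (Y ^\<^sub>m Suc (n - 1 - c)) $$ (i, n - 1)" .
    show "(Acon n Y * shiftX n) $$ (i,c) = (Y * Acon n Y) $$ (i,c)"
    proof (cases c)
      case 0
      then show ?thesis using e shift_right[OF c i cc] su_pow[OF Y i, of "n-1" n] n by auto
    next
      case (Suc c')
      then have "Suc (n - 1 - c) = n - 1 - c'" using cc by auto
      then show ?thesis using e shift_right[OF c i cc] Suc cc i by (simp add: Acon_def)
    qed
  qed (use c cY in \<open>auto simp: shiftX_def\<close>)
  show ?thesis using u l m by blast
qed

lemma Acon_unique:
  assumes Y: "su n Y" and n: "n > 0"
    and A: "unitri_upper n A" "last_col_trivial n A" "A * shiftX n = Y * A"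
  shows "A = Acon n Y"
proof -
  have cY: "Y \<in> carrier_mat n n" using Y by (auto simp: su_def)
  have cA: "A \<in> carrier_mat n n" using A by (auto simp: unitri_upper_def)
  have key: "\<forall>i<n. A $$ (i, n - 1 - j) = (Y ^\<^sub>m j) $$ (i, n - 1)" if "j < n" for j
    using that
  proof (induction j)
    case 0
    show ?case
    proof (intro allI impI)
      fix i assume i: "i < n"
      show "A $$ (i, n - 1 - 0) = (Y ^\<^sub>m 0) $$ (i, n - 1)"
      proof (cases "i = n - 1")
        case True then show ?thesis using A(1) i cY unfolding unitri_upper_def by auto
      next
        case False then show ?thesis using A(2) i cY unfolding last_col_trivial_def by auto
      qed
    qed
  next
    case (Suc j)
    show ?case
    proof (intro allI impI)
      fix i assume i: "i < n"
      let ?c = "n - 1 - j"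
      have cc: "?c < n" "?c \<noteq> 0" "?c - 1 = n - 1 - Suc j" using Suc.prems n by auto
      have "A $$ (i, n - 1 - Suc j) = (A * shiftX n) $$ (i, ?c)"
        using shift_right[OF cA i cc(1)] cc by simp
      also have "\<dots> = (Y * A) $$ (i, ?c)" using A(3) by simp
      also have "\<dots> = (\<Sum>r<n. Y $$ (i,r) * A $$ (r, ?c))" using cY cA i cc by (intro mult_entry) auto
      also have "\<dots> = (\<Sum>r<n. Y $$ (i,r) * (Y ^\<^sub>m j) $$ (r, n - 1))"
        using Suc.IH Suc.prems by (intro sum.cong) auto
      also have "\<dots> = (Y * Y ^\<^sub>m j) $$ (i, n - 1)" using i cY n by (subst mult_entry[of _ n]) auto
      also have "\<dots> = (Y ^\<^sub>m Suc j) $$ (i, n - 1)" using pow_mat_Suc_left[OF cY] by simp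
      finally show "A $$ (i, n - 1 - Suc j) = (Y ^\<^sub>m Suc j) $$ (i, n - 1)" .
    qed
  qed
  show ?thesis
  proof (rule eq_matI)
    fix i c assume "i < dim_row (Acon n Y)" "c < dim_col (Acon n Y)"
    then have i: "i < n" and c: "c < n" by (auto simp: Acon_def)
    have "n - 1 - c < n" "n - 1 - (n - 1 - c) = c" using c by auto
    then show "A $$ (i,c) = Acon n Y $$ (i,c)" using key[of "n - 1 - c"] i c by (auto simp: Acon_def)
  qed (use cA in \<open>auto simp: Acon_def\<close>)
qed

lemma unitri_inv:
  assumes A: "unitri_upper n (A :: 'a::field mat)"
  shows "\<exists>Ai. Ai \<in> carrier_mat n n \<and> A * Ai = 1\<^sub>m n \<and> Ai * A = 1\<^sub>m n"
proof -
  have cA: "A \<in> carrier_mat n n" using A by (auto simp: unitri_upper_def)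
  have ut: "upper_triangular A" using A cA unfolding upper_triangular_def unitri_upper_def by auto
  have "det A = prod_list (diag_mat A)" by (rule det_upper_triangular[OF ut cA])
  also have "\<dots> = (\<Prod>i = 0..<n. A $$ (i,i))" using cA by (simp add: prod_list_diag_prod)
  also have "\<dots> = 1" using A by (auto simp: unitri_upper_def intro: prod.neutral)
  finally have "det A \<noteq> 0" by simp
  from det_non_zero_imp_unit[OF cA this, of undefined]
  show ?thesis unfolding Units_def by (auto simp: ring_mat_simps)
qed

lemma mat_inv_eq:
  assumes cA: "A \<in> carrier_mat n n" and cC: "C \<in> carrier_mat n n"
    and "A * C = 1\<^sub>m n" "C * A = 1\<^sub>m n"
  shows "mat_inv A = C"
  unfolding mat_inv_def inverts_mat_def
proof (rule the_equality)
  show "C \<in> carrier_mat (dim_row A) (dim_row A) \<and> A * C = 1\<^sub>m (dim_row A) \<and> C * A = 1\<^sub>m (dim_row C)"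
    using assms by auto
next
  fix D assume D: "D \<in> carrier_mat (dim_row A) (dim_row A) \<and> A * D = 1\<^sub>m (dim_row A) \<and> D * A = 1\<^sub>m (dim_row D)"
  then have cD: "D \<in> carrier_mat n n" and AD: "A * D = 1\<^sub>m n" and DA: "D * A = 1\<^sub>m n" using cA by auto
  have "D = D * (A * C)" using cD assms by simp
  also have "\<dots> = (D * A) * C" using cD cA cC by simp
  also have "\<dots> = C" using DA cC by simp
  finally show "D = C" .
qed

lemma conj_iff:
  assumes A: "unitri_upper n (A :: 'a::field mat)" and cY: "Y \<in> carrier_mat n n"
  shows "A * (1\<^sub>m n + shiftX n) * mat_inv A = 1\<^sub>m n + Y \<longleftrightarrow> A * shiftX n = Y * A"
proof -
  obtain Ai where Ai: "Ai \<in> carrier_mat n n" "A * Ai = 1\<^sub>m n" "Ai * A = 1\<^sub>m n"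
    using unitri_inv[OF A] by blast
  have cA: "A \<in> carrier_mat n n" using A by (auto simp: unitri_upper_def)
  have cX: "shiftX n \<in> carrier_mat n n" by (simp add: shiftX_def)
  have inv: "mat_inv A = Ai" by (rule mat_inv_eq[OF cA Ai])
  let ?B = "1\<^sub>m n + shiftX n"
  have cB: "?B \<in> carrier_mat n n" using cX by (rule add_carrier_mat)
  have e1: "A * ?B = A + A * shiftX n" using cA cX by (subst mult_add_distrib_mat[OF cA one_carrier_mat cX]) simp
  have e2: "(1\<^sub>m n + Y) * A = A + Y * A" using cA cY by (subst add_mult_distrib_mat[OF one_carrier_mat cY cA]) simp
  have "A * ?B * Ai = 1\<^sub>m n + Y \<longleftrightarrow> A * ?B = (1\<^sub>m n + Y) * A"
  proof
    assume h: "A * ?B * Ai = 1\<^sub>m n + Y"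
    have cAB: "A * ?B \<in> carrier_mat n n" using cA cB by (rule mult_carrier_mat)
    have "A * ?B = A * ?B * (Ai * A)" using cAB Ai by (simp add: right_mult_one_mat)
    also have "\<dots> = (A * ?B * Ai) * A" by (rule assoc_mult_mat[symmetric, OF cAB Ai(1) cA])
    finally show "A * ?B = (1\<^sub>m n + Y) * A" using h by simp
  next
    assume h: "A * ?B = (1\<^sub>m n + Y) * A"
    have c1: "1\<^sub>m n + Y \<in> carrier_mat n n" using cY by (rule add_carrier_mat)
    have "A * ?B * Ai = (1\<^sub>m n + Y) * A * Ai" using h by simp
    also have "\<dots> = (1\<^sub>m n + Y) * (A * Ai)" by (rule assoc_mult_mat[OF c1 cA Ai(1)])
    finally show "A * ?B * Ai = 1\<^sub>m n + Y" using Ai c1 by (simp add: right_mult_one_mat)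
  qed
  also have "\<dots> \<longleftrightarrow> A + A * shiftX n = A + Y * A" using e1 e2 by simp
  also have "\<dots> \<longleftrightarrow> A * shiftX n = Y * A"
  proof
    assume h: "A + A * shiftX n = A + Y * A"
    show "A * shiftX n = Y * A"
    proof (rule eq_matI)
      fix i j assume ij: "i < dim_row (Y * A)" "j < dim_col (Y * A)"
      have "(A + A * shiftX n) $$ (i,j) = (A + Y * A) $$ (i,j)" using h by simp
      then show "(A * shiftX n) $$ (i,j) = (Y * A) $$ (i,j)" using ij cA cY cX by (simp add: shiftX_def)
    qed (use cA cY cX in auto)
  qed simp
  finally show ?thesis using inv by simp
qed

lemma main_gen:
  assumes M: "ut1 n 1 M" and n: "n > 0"
  shows "\<exists>!A. unitri_upper n A \<and> last_col_trivial n A \<and> A * (1\<^sub>m n + shiftX n) * mat_inv A = M"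
proof -
  define Y where "Y = M - 1\<^sub>m n"
  have cM: "M \<in> carrier_mat n n" using M by (auto simp: ut1_def)
  have cY: "Y \<in> carrier_mat n n" unfolding Y_def by (rule minus_carrier_mat, simp)
  have MY: "M = 1\<^sub>m n + Y"
    by (rule eq_matI) (use cM cY in \<open>auto simp: Y_def\<close>)
  have Y: "su n Y" unfolding su_def
  proof (intro conjI allI impI)
    fix i j assume "i < n" "j < n" "j \<le> i"
    then show "Y $$ (i,j) = 0" using M cM unfolding Y_def ut1_def
      by (cases "j = i") auto
  next
    fix i assume "Suc i < n"
    then show "Y $$ (i, Suc i) = 1" using M cM unfolding Y_def ut1_def by auto
  qed (rule cY)
  show ?thesis
  proof (rule ex1I[of _ "Acon n Y"])
    show "unitri_upper n (Acon n Y) \<and> last_col_trivial n (Acon n Y) \<and> Acon n Y * (1\<^sub>m n + shiftX n) * mat_inv (Acon n Y) = M"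
      using Acon_good[OF Y n] conj_iff[OF _ cY] MY by auto
  next
    fix A assume "unitri_upper n A \<and> last_col_trivial n A \<and> A * (1\<^sub>m n + shiftX n) * mat_inv A = M"
    then show "A = Acon n Y" using Acon_unique[OF Y n] conj_iff[OF _ cY] MY by auto
  qed
qed

lemma B_ut1: "ut1 n 1 (1\<^sub>m n + shiftX n)"
  unfolding ut1_def by (auto simp: shiftX_def)

definition Cinv :: "nat \<Rightarrow> 'a::field mat" where
  "Cinv n = mat n n (\<lambda>(i,j). if i \<le> j then (-1) ^ (j - i) else 0)"

lemma Cinv_ut1: "ut1 n (-1) (Cinv n)"
  unfolding ut1_def Cinv_def by auto

lemma B_Cinv: "(1\<^sub>m n + shiftX n) * Cinv n = (1\<^sub>m n :: 'a::field mat)"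
proof (rule eq_matI)
  have cB: "(1\<^sub>m n + shiftX n :: 'a mat) \<in> carrier_mat n n" by (simp add: shiftX_def)
  have cC: "(Cinv n :: 'a mat) \<in> carrier_mat n n" by (simp add: Cinv_def)
  fix i j assume "i < dim_row (1\<^sub>m n :: 'a mat)" "j < dim_col (1\<^sub>m n :: 'a mat)"
  then have i: "i < n" and j: "j < n" by auto
  have e: "((1\<^sub>m n + shiftX n) * Cinv n) $$ (i,j) = (\<Sum>r<n. (1\<^sub>m n + shiftX n :: 'a mat) $$ (i,r) * Cinv n $$ (r,j))"
    by (rule mult_entry[OF cB cC i j])
  show "((1\<^sub>m n + shiftX n) * Cinv n) $$ (i,j) = (1\<^sub>m n :: 'a mat) $$ (i,j)"
  proof (cases "Suc i < n")
    case True
    have "(\<Sum>r<n. (1\<^sub>m n + shiftX n :: 'a mat) $$ (i,r) * Cinv n $$ (r,j))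
        = (1\<^sub>m n + shiftX n :: 'a mat) $$ (i,i) * Cinv n $$ (i,j) + (1\<^sub>m n + shiftX n :: 'a mat) $$ (i,Suc i) * Cinv n $$ (Suc i,j)"
      by (rule sum_two_pt) (use i True in \<open>auto simp: shiftX_def\<close>)
    also have "\<dots> = Cinv n $$ (i,j) + Cinv n $$ (Suc i,j)" using i True by (simp add: shiftX_def)
    also have "\<dots> = (1\<^sub>m n :: 'a mat) $$ (i,j)"
    proof -
      consider "j < i" | "j = i" | "i < j" by linarith
      then show ?thesis
      proof cases
        case 3
        then obtain d where d: "j - i = Suc d" "j - Suc i = d" by (metis Suc_diff_Suc)
        show ?thesis using 3 i j True d by (simp add: Cinv_def)
      qed (use i j True in \<open>auto simp: Cinv_def\<close>)
    qed
    finally show ?thesis using e by simp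
  next
    case False
    have "(\<Sum>r<n. (1\<^sub>m n + shiftX n :: 'a mat) $$ (i,r) * Cinv n $$ (r,j))
        = (1\<^sub>m n + shiftX n :: 'a mat) $$ (i,i) * Cinv n $$ (i,j)"
      by (rule sum_one_pt) (use i False in \<open>auto simp: shiftX_def\<close>)
    also have "\<dots> = (1\<^sub>m n :: 'a mat) $$ (i,j)" using i j False by (auto simp: shiftX_def Cinv_def)
    finally show ?thesis using e by simp
  qed
qed (auto simp: shiftX_def Cinv_def)

lemma pow_inv:
  assumes cB: "B \<in> carrier_mat n n" and cC: "C \<in> carrier_mat n n"
    and BC: "B * C = 1\<^sub>m n" and CB: "C * B = 1\<^sub>m n"
  shows "C ^\<^sub>m m * B ^\<^sub>m m = 1\<^sub>m n"
proof (induction m)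
  case 0 then show ?case using cB cC by simp
next
  case (Suc m)
  have c1: "C ^\<^sub>m m \<in> carrier_mat n n" "B ^\<^sub>m m \<in> carrier_mat n n" using cB cC by auto
  have "C ^\<^sub>m Suc m * B ^\<^sub>m Suc m = (C ^\<^sub>m m * C) * (B * B ^\<^sub>m m)"
    using pow_mat_Suc_left[OF cB, of m] by simp
  also have "\<dots> = C ^\<^sub>m m * (C * (B * B ^\<^sub>m m))"
    by (rule assoc_mult_mat[OF c1(1) cC]) (use cB c1 in auto)
  also have "\<dots> = C ^\<^sub>m m * ((C * B) * B ^\<^sub>m m)"
    using assoc_mult_mat[symmetric, OF cC cB c1(2)] by simp
  also have "\<dots> = 1\<^sub>m n" using CB Suc c1 by (simp add: left_mult_one_mat[OF c1(2)])
  finally show ?case .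
qed

theorem lemma3p4:
  fixes p s k n :: nat and B :: "'a :: field mat"
  assumes "CHAR('a) = p" and "p > 0" and "s \<ge> 1" and "n = 1 + p ^ s"
    and "B = 1\<^sub>m n + shiftX n" and "k > 0"
  shows "(\<exists>!A. unitri_upper n A \<and> last_col_trivial n A
            \<and> A * B * mat_inv A = B ^\<^sub>m (1 + p ^ k))
         \<and> (p = 2 \<longrightarrow> (\<exists>!A. unitri_upper n A \<and> last_col_trivial n A
            \<and> A * B * mat_inv A = mat_inv (B ^\<^sub>m (1 + 2 ^ k))))"
proof
  have n: "n > 0" using assms(4) by simp
  have p0: "(of_nat p :: 'a) = 0" unfolding assms(1)[symmetric] by (rule of_nat_CHAR)
  have ch: "(of_nat (1 + p ^ k) :: 'a) = 1"
  proof -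
    have "(of_nat (1 + p ^ k) :: 'a) = 1 + of_nat p ^ k" by (simp add: of_nat_power)
    also have "\<dots> = 1" using p0 assms(6) by (simp add: zero_power)
    finally show ?thesis .
  qed
  have Bu: "ut1 n 1 B" using B_ut1 assms(5) by simp
  have "ut1 n (of_nat (1 + p ^ k) * 1) (B ^\<^sub>m (1 + p ^ k))" by (rule ut1_pow[OF Bu])
  then have "ut1 n 1 (B ^\<^sub>m (1 + p ^ k))" by (simp only: ch mult_1_right)
  then show "\<exists>!A. unitri_upper n A \<and> last_col_trivial n A \<and> A * B * mat_inv A = B ^\<^sub>m (1 + p ^ k)"
    using main_gen[OF _ n] assms(5) by simp
  show "p = 2 \<longrightarrow> (\<exists>!A. unitri_upper n A \<and> last_col_trivial n A
            \<and> A * B * mat_inv A = mat_inv (B ^\<^sub>m (1 + 2 ^ k)))"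
  proof
    assume p2: "p = 2"
    let ?m = "1 + 2 ^ k :: nat"
    have cB: "B \<in> carrier_mat n n" using assms(5) by (simp add: shiftX_def)
    have cC: "(Cinv n :: 'a mat) \<in> carrier_mat n n" by (simp add: Cinv_def)
    have BC: "B * Cinv n = 1\<^sub>m n" using B_Cinv assms(5) by simp
    have CB: "Cinv n * B = 1\<^sub>m n" by (rule mat_mult_left_right_inverse[OF cB cC BC])
    have e1: "Cinv n ^\<^sub>m ?m * B ^\<^sub>m ?m = 1\<^sub>m n" by (rule pow_inv[OF cB cC BC CB])
    have e2: "B ^\<^sub>m ?m * Cinv n ^\<^sub>m ?m = 1\<^sub>m n"
      by (rule mat_mult_left_right_inverse[OF pow_carrier_mat[OF cC] pow_carrier_mat[OF cB] e1])
    have inv: "mat_inv (B ^\<^sub>m ?m) = Cinv n ^\<^sub>m ?m"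
      by (rule mat_inv_eq[OF pow_carrier_mat[OF cB] pow_carrier_mat[OF cC] e2 e1])
    have ch2: "(of_nat ?m :: 'a) = 1" using ch unfolding p2 .
    have two: "(1::'a) + 1 = 0" using p0 unfolding p2 by simp
    have m1: "(-1 :: 'a) = 1" using two neg_eq_iff_add_eq_0 by blast
    have "ut1 n (of_nat ?m * (-1)) (Cinv n ^\<^sub>m ?m :: 'a mat)" by (rule ut1_pow[OF Cinv_ut1])
    moreover have "(of_nat ?m * (-1) :: 'a) = 1" unfolding ch2 using m1 by simp
    ultimately have "ut1 n 1 (Cinv n ^\<^sub>m ?m :: 'a mat)" by metis
    then show "\<exists>!A. unitri_upper n A \<and> last_col_trivial n A
            \<and> A * B * mat_inv A = mat_inv (B ^\<^sub>m ?m)"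
      using main_gen[OF _ n] assms(5) inv by simp
  qed
qed

end
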